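(* Let $\mu$ be an admissible even Borel probability measure on $\mathbb{R}$. Then $\Lambda_\mu'$ is a strictly increasing surjection from $J=\{t:\Lambda_\mu(t)<\infty\}=(-t^{\ast},t^{\ast})$ onto $I=(-x^{\ast},x^{\ast})$. In particular, $\lim_{t\to\pm t^{\ast}}\Lambda_\mu'(t)=\pm x^{\ast}$.
   Context: Let $X$ have distribution $\mu$. Write $x^{\ast}=\sup\{x\in\mathbb{R}:\mu([x,\infty))>0\}$ (possibly $+\infty$), $I=(-x^{\ast},x^{\ast})$, $\Lambda_\mu(t)=\ln\int e^{tx}\,d\mu(x)$, $J=\{\Lambda_\mu<\infty\}$ and $t^{\ast}=\sup J$ (possibly $+\infty$). The measure $\mu$ is admissible if: $\mathrm{Var}(X)>0$; there is $r>0$ with $\mathbb{E}e^{tX}<\infty$ for $t\in(-r,r)$; if $x^{\ast}<\infty$ then $\mu(\{x^{\ast}\})=0$; and one of: (1) $x^{\ast}<\infty$, (2) $x^{\ast}=+\infty$ and $J=\mathbb{R}$, (3) $x^{\ast}=+\infty$, $J$ bounded and $\mu$ log-concave. For such $\mu$, $J$ is the open interval $(-t^{\ast},t^{\ast})$ and $\Lambda_\mu$ is $C^\infty$ on it. *)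

theory Defs
  imports "HOL-Probability.Probability"
begin

definition x_star :: "real measure \<Rightarrow> ereal" where
  "x_star M = Sup {ereal x | x. measure M {x..} > 0}"

definition Lambda :: "real measure \<Rightarrow> real \<Rightarrow> real" where
  "Lambda M t = ln (LINT x|M. exp (t * x))"

text \<open>J = {t. Lambda_mu(t) < oo}, i.e. e^(t x) is integrable.\<close>
definition J_set :: "real measure \<Rightarrow> real set" where
  "J_set M = {t. integrable M (\<lambda>x. exp (t * x))}"

definition t_star :: "real measure \<Rightarrow> ereal" where
  "t_star M = Sup (ereal ` J_set M)"

definition log_concave_measure :: "real measure \<Rightarrow> bool" where
  "log_concave_measure M \<longleftrightarrow>
     (\<forall>A B l. A \<in> sets borel \<longrightarrow> B \<in> sets borel \<longrightarrow> 0 < l \<longrightarrow> l < 1 \<longrightarrow>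
        {l * a + (1 - l) * b | a b. a \<in> A \<and> b \<in> B} \<in> sets borel \<longrightarrow>
        measure M {l * a + (1 - l) * b | a b. a \<in> A \<and> b \<in> B}
          \<ge> measure M A powr l * measure M B powr (1 - l))"

definition even_measure :: "real measure \<Rightarrow> bool" where
  "even_measure M \<longleftrightarrow> distr M borel uminus = M"

definition admissible :: "real measure \<Rightarrow> bool" where
  "admissible M \<longleftrightarrow>
     (LINT x|M. (x - (LINT y|M. y))\<^sup>2) > 0 \<and>
     (\<exists>r>0. \<forall>t. \<bar>t\<bar> < r \<longrightarrow> integrable M (\<lambda>x. exp (t * x))) \<and>
     (x_star M < \<infinity> \<longrightarrow> measure M {real_of_ereal (x_star M)} = 0) \<and>
     (x_star M < \<infinity> \<or>
      (x_star M = \<infinity> \<and> J_set M = UNIV) \<or>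
      (x_star M = \<infinity> \<and> bounded (J_set M) \<and> log_concave_measure M))"

end

theory Submission
  imports Defs
begin

locale mgf = prob_space M for M :: "real measure" +
  assumes sb: "sets M = sets borel"
    and ev: "distr M borel uminus = M"
    and var: "(LINT x|M. (x - (LINT y|M. y))\<^sup>2) > 0"
    and rr: "\<exists>r>0. \<forall>t. \<bar>t\<bar> < r \<longrightarrow> integrable M (\<lambda>x. exp (t * x))"
    and xs0: "x_star M < \<infinity> \<longrightarrow> measure M {real_of_ereal (x_star M)} = 0"
begin

lemma sp: "space M = UNIV"
  using sets_eq_imp_space_eq[OF sb] by simp

lemma meas:
  fixes f :: "real \<Rightarrow> 'b::topological_space"
  shows "f \<in> borel_measurable borel \<Longrightarrow> f \<in> borel_measurable M"
  using measurable_cong_sets[of M borel "borel::'b measure" borel] sb by simp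

lemma setsM: "A \<in> sets borel \<Longrightarrow> A \<in> sets M"
  using sb by simp

lemma J_iff: "t \<in> J_set M \<longleftrightarrow> integrable M (\<lambda>x. exp (t * x))"
  by (simp add: J_set_def)

lemma J_conv:
  assumes "s \<in> J_set M" "v \<in> J_set M" "s \<le> u" "u \<le> v"
  shows "u \<in> J_set M"
proof -
  have i: "integrable M (\<lambda>x. exp (s * x) + exp (v * x))"
    using assms by (simp add: J_iff)
  have "\<And>x. exp (u * x) \<le> exp (s * x) + exp (v * x)"
  proof -
    fix x :: real
    show "exp (u * x) \<le> exp (s * x) + exp (v * x)"
    proof (cases "x \<ge> 0")
      case True
      then have "u * x \<le> v * x" using assms by (simp add: mult_right_mono)
      then show ?thesis by (smt (verit) exp_gt_zero exp_le_cancel_iff)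
    next
      case False
      then have "u * x \<le> s * x" using assms by (simp add: mult_right_mono_neg)
      then show ?thesis by (smt (verit) exp_gt_zero exp_le_cancel_iff)
    qed
  qed
  then show ?thesis unfolding J_iff
    by (intro Bochner_Integration.integrable_bound[OF i]) (auto intro!: meas)
qed

lemma J0: "0 \<in> J_set M"
  by (simp add: J_iff)

lemma even_int:
  fixes f :: "real \<Rightarrow> real"
  assumes "f \<in> borel_measurable borel"
  shows "integrable M (\<lambda>x. f (- x)) = integrable M f"
    and "(LINT x|M. f (- x)) = (LINT x|M. f x)"
proof -
  have g: "(uminus::real\<Rightarrow>real) \<in> M \<rightarrow>\<^sub>M borel" by (rule meas) simp
  have "integrable (distr M borel uminus) f = integrable M (\<lambda>x. f (- x))"
    by (rule integrable_distr_eq[OF g assms])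
  then show "integrable M (\<lambda>x. f (- x)) = integrable M f" using ev by simp
  have "integral\<^sup>L (distr M borel uminus) f = (LINT x|M. f (- x))"
    by (rule integral_distr[OF g assms])
  then show "(LINT x|M. f (- x)) = (LINT x|M. f x)" using ev by simp
qed

lemma even_meas:
  fixes A :: "real set"
  assumes "A \<in> sets borel"
  shows "measure M (uminus -` A) = measure M A"
proof -
  have g: "(uminus::real\<Rightarrow>real) \<in> M \<rightarrow>\<^sub>M borel" by (rule meas) simp
  have "measure (distr M borel uminus) A = measure M (uminus -` A \<inter> space M)"
    by (rule measure_distr[OF g assms])
  then show ?thesis using ev sp by simp
qed

lemma J_neg: "t \<in> J_set M \<Longrightarrow> - t \<in> J_set M"
  using even_int(1)[of "\<lambda>x. exp (t * x)"] by (simp add: J_iff)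


lemma null_of_meas0:
  assumes "A \<in> sets borel" "measure M A = 0"
  shows "AE x in M. x \<notin> A"
proof -
  have "A \<in> null_sets M"
    using assms emeasure_eq_measure setsM by auto
  then show ?thesis by (rule AE_not_in)
qed

lemma xs_null:
  assumes "x_star M < ereal y"
  shows "measure M {y..} = 0"
proof (rule ccontr)
  assume "measure M {y..} \<noteq> 0"
  then have "measure M {y..} > 0" using measure_nonneg[of M "{y..}"] by linarith
  then have "ereal y \<le> x_star M" unfolding x_star_def by (auto intro!: Sup_upper)
  then show False using assms by simp
qed

lemma xs_pos:
  assumes "ereal a < x_star M"
  shows "measure M {a..} > 0"
proof -
  obtain s where s: "s \<in> {ereal x | x. measure M {x..} > 0}" "ereal a < s"
    using assms unfolding x_star_def less_Sup_iff by blast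
  then obtain y where y: "s = ereal y" "measure M {y..} > 0" by blast
  have "measure M {y..} \<le> measure M {a..}"
    using y s by (intro finite_measure_mono) (auto intro!: setsM)
  then show ?thesis using y by simp
qed

lemma xs_nonneg: "ereal 0 \<le> x_star M"
proof -
  have "measure M {..0} = measure M {0..}"
    using even_meas[of "{0..}"] by (simp add: vimage_def atMost_def)
  moreover have "{..0::real} \<union> {0..} = UNIV" by auto
  moreover have "measure M UNIV \<le> measure M {..0} + measure M {0..}"
    using measure_subadditive[of "{..0}" M "{0..}"] setsM
      \<open>{..0::real} \<union> {0..} = UNIV\<close> by (auto simp: sp emeasure_eq_measure)
  moreover have "measure M UNIV = 1" using prob_space sp by simp
  ultimately have "measure M {0..} > 0" by simp
  then show ?thesis unfolding x_star_def by (auto intro!: Sup_upper)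
qed

lemma AE_below:
  assumes "x_star M < \<infinity>"
  shows "AE x in M. ereal x < x_star M"
proof -
  define c where "c = real_of_ereal (x_star M)"
  have xc: "x_star M = ereal c" using assms xs_nonneg c_def
    by (cases "x_star M") auto
  have "\<forall>n::nat. AE x in M. x \<notin> {c + 1 / Suc n..}"
    by (intro allI null_of_meas0 xs_null) (auto simp: xc)
  then have "AE x in M. \<forall>n::nat. x \<notin> {c + 1 / Suc n..}"
    by (simp add: AE_all_countable)
  moreover have "AE x in M. x \<notin> {c}"
    using xs0 assms by (intro null_of_meas0) (auto simp: c_def)
  ultimately show ?thesis
  proof eventually_elim
    case (elim x)
    have "x \<le> c"
    proof (rule ccontr)
      assume "\<not> x \<le> c"
      then obtain n where "1 / Suc n < x - c"
        using reals_Archimedean by (metis diff_gt_0_iff_gt inverse_eq_divide not_le)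
      then have "c + 1 / Suc n \<le> x" by linarith
      then show False using elim by auto
    qed
    then show ?case using elim xc by auto
  qed
qed

lemma pow_le_fact_exp:
  assumes "(y::real) \<ge> 0"
  shows "y ^ k \<le> fact k * exp y"
proof -
  have "(\<lambda>n. y ^ n / fact n) sums exp y"
    using exp_converges[of y] by (simp add: divide_inverse mult.commute scaleR_conv_of_real)
  then have "sum (\<lambda>n. y ^ n / fact n) {k} \<le> suminf (\<lambda>n. y ^ n / fact n)"
    by (intro sum_le_suminf) (auto simp: sums_summable assms)
  also have "\<dots> = exp y" using \<open>(\<lambda>n. y ^ n / fact n) sums exp y\<close> by (simp add: sums_unique[symmetric])
  finally have "sum (\<lambda>n. y ^ n / fact n) {k} \<le> exp y" .
  then show ?thesis by (simp add: divide_le_eq mult.commute)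
qed


lemma exp_split:
  fixes t x d :: real
  shows "exp (t * x) * exp (d * \<bar>x\<bar>) \<le> exp ((t + d) * x) + exp ((t - d) * x)"
proof (cases "x \<ge> 0")
  case True
  then have "\<bar>x\<bar> = x" by simp
  then have "exp (t * x) * exp (d * \<bar>x\<bar>) = exp ((t + d) * x)"
    by (simp add: exp_add[symmetric] algebra_simps)
  then show ?thesis by (smt (verit) exp_gt_zero)
next
  case False
  then have "\<bar>x\<bar> = - x" by simp
  then have "exp (t * x) * exp (d * \<bar>x\<bar>) = exp ((t - d) * x)"
    by (simp add: exp_add[symmetric] algebra_simps)
  then show ?thesis by (smt (verit) exp_gt_zero)
qed

lemma int_poly:
  assumes "t - d \<in> J_set M" "t + d \<in> J_set M" "0 \<le> c" "c < d"
  shows "integrable M (\<lambda>x. \<bar>x\<bar> ^ k * exp (t * x) * exp (c * \<bar>x\<bar>))"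
proof -
  define K where "K = fact k / (d - c) ^ k"
  have i: "integrable M (\<lambda>x. K * (exp ((t + d) * x) + exp ((t - d) * x)))"
    using assms by (auto simp: J_iff)
  have dc: "d - c > 0" using assms by simp
  have K0: "K \<ge> 0" unfolding K_def using dc by simp
  have b: "\<bar>x\<bar> ^ k * exp (t * x) * exp (c * \<bar>x\<bar>) \<le> K * (exp ((t + d) * x) + exp ((t - d) * x))" for x
  proof -
    define E where "E = exp ((d - c) * \<bar>x\<bar>)"
    have "((d - c) * \<bar>x\<bar>) ^ k \<le> fact k * E"
      unfolding E_def using dc by (intro pow_le_fact_exp) simp
    then have p: "\<bar>x\<bar> ^ k * (d - c) ^ k \<le> fact k * E"
      by (simp only: power_mult_distrib mult.commute)
    have "\<bar>x\<bar> ^ k \<le> (fact k * E) / (d - c) ^ k"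
      using p dc by (simp add: pos_le_divide_eq)
    also have "\<dots> = K * E" by (simp add: K_def)
    finally have q: "\<bar>x\<bar> ^ k \<le> K * E" .
    have "\<bar>x\<bar> ^ k * exp (c * \<bar>x\<bar>) \<le> K * E * exp (c * \<bar>x\<bar>)"
      using q by (rule mult_right_mono) simp
    also have "E * exp (c * \<bar>x\<bar>) = exp (d * \<bar>x\<bar>)"
      unfolding E_def by (simp add: exp_add[symmetric] algebra_simps)
    then have "K * E * exp (c * \<bar>x\<bar>) = K * exp (d * \<bar>x\<bar>)" by (simp only: mult.assoc)
    finally have r: "\<bar>x\<bar> ^ k * exp (c * \<bar>x\<bar>) \<le> K * exp (d * \<bar>x\<bar>)" .
    have "\<bar>x\<bar> ^ k * exp (t * x) * exp (c * \<bar>x\<bar>) = (\<bar>x\<bar> ^ k * exp (c * \<bar>x\<bar>)) * exp (t * x)"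
      by (simp only: mult_ac)
    also have "\<dots> \<le> K * exp (d * \<bar>x\<bar>) * exp (t * x)"
      using r by (rule mult_right_mono) simp
    also have "\<dots> = K * (exp (t * x) * exp (d * \<bar>x\<bar>))" by (simp only: mult_ac)
    also have "\<dots> \<le> K * (exp ((t + d) * x) + exp ((t - d) * x))"
      using exp_split[of t x d] K0 by (rule mult_left_mono)
    finally show ?thesis .
  qed
  show ?thesis
  proof (rule Bochner_Integration.integrable_bound[OF i])
    show "(\<lambda>x. \<bar>x\<bar> ^ k * exp (t * x) * exp (c * \<bar>x\<bar>)) \<in> borel_measurable M"
      by (intro meas) simp
    show "AE x in M. norm (\<bar>x\<bar> ^ k * exp (t * x) * exp (c * \<bar>x\<bar>))
       \<le> norm (K * (exp ((t + d) * x) + exp ((t - d) * x)))"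
    proof (intro AE_I2)
      fix x
      have "0 \<le> K * (exp ((t + d) * x) + exp ((t - d) * x))" using K0 by simp
      then show "norm (\<bar>x\<bar> ^ k * exp (t * x) * exp (c * \<bar>x\<bar>))
       \<le> norm (K * (exp ((t + d) * x) + exp ((t - d) * x)))" using b[of x] by simp
    qed
  qed
qed

lemma int_xk:
  assumes "t - d \<in> J_set M" "t + d \<in> J_set M" "0 < d"
  shows "integrable M (\<lambda>x. x ^ k * exp (t * x))"
proof -
  have "integrable M (\<lambda>x. \<bar>x\<bar> ^ k * exp (t * x) * exp (0 * \<bar>x\<bar>))"
    using assms by (intro int_poly) auto
  then show ?thesis
    by (rule Bochner_Integration.integrable_bound) (auto intro!: meas simp: abs_mult power_abs)
qed


end

context mgf begin
definition mom :: "nat \<Rightarrow> real \<Rightarrow> real" where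
  "mom k t = (LINT x|M. x ^ k * exp (t * x))"

lemma exp_taylor2:
  fixes y :: real
  shows "\<bar>exp y - 1 - y\<bar> \<le> y\<^sup>2 * exp \<bar>y\<bar>"
proof -
  obtain s where s: "\<bar>s\<bar> \<le> \<bar>y\<bar>" "exp y = (\<Sum>m<2. y ^ m / fact m) + exp s / fact 2 * y ^ 2"
    using Maclaurin_exp_le[of y 2] by blast
  then have "exp y - 1 - y = exp s / 2 * y\<^sup>2"
    by (simp add: numeral_2_eq_2)
  moreover have "exp s \<le> exp \<bar>y\<bar>" using s(1) by simp
  then have a: "exp s * y\<^sup>2 \<le> exp \<bar>y\<bar> * y\<^sup>2" by (intro mult_right_mono) auto
  have b: "0 \<le> exp \<bar>y\<bar> * y\<^sup>2" by simp
  have "exp s / 2 * y\<^sup>2 \<le> y\<^sup>2 * exp \<bar>y\<bar>"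
  proof -
    have "exp s / 2 * y\<^sup>2 = (exp s * y\<^sup>2) / 2" by simp
    moreover have "y\<^sup>2 * exp \<bar>y\<bar> = exp \<bar>y\<bar> * y\<^sup>2" by simp
    ultimately show ?thesis using a b by linarith
  qed
  moreover have "exp s / 2 * y\<^sup>2 \<ge> 0" by simp
  ultimately show ?thesis
    using \<open>exp y - 1 - y = exp s / 2 * y\<^sup>2\<close> by linarith
qed

lemma mom_deriv:
  assumes "t - d \<in> J_set M" "t + d \<in> J_set M" "0 < d"
  shows "(mom k has_real_derivative mom (Suc k) t) (at t)"
proof -
  define c where "c = d / 2"
  have c: "0 < c" "c < d" using assms c_def by auto
  define B where "B = (\<lambda>x. \<bar>x\<bar> ^ (k + 2) * exp (t * x) * exp (c * \<bar>x\<bar>))"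
  define C where "C = (LINT x|M. B x)"
  have iB: "integrable M B"
    unfolding B_def using assms c by (intro int_poly) auto
  have i0: "integrable M (\<lambda>x. x ^ k * exp (t * x))"
    using assms by (intro int_xk) auto
  have i2: "integrable M (\<lambda>x. x ^ Suc k * exp (t * x))"
    using assms by (intro int_xk) auto
  have key: "\<bar>mom k (t + h) - mom k t - h * mom (Suc k) t\<bar> \<le> C * h\<^sup>2" if h: "\<bar>h\<bar> < c" for h
  proof -
    have Jh: "t + h - c \<in> J_set M" "t + h + c \<in> J_set M"
      using h c assms by (auto intro!: J_conv[OF assms(1) assms(2)] simp: c_def)
    have i1: "integrable M (\<lambda>x. x ^ k * exp ((t + h) * x))"
      using Jh c by (intro int_xk[of _ c]) auto
    define g where "g = (\<lambda>x. x ^ k * exp (t * x) * (exp (h * x) - 1 - h * x))"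
    have "(LINT x|M. g x) = (LINT x|M. x ^ k * exp ((t + h) * x) - x ^ k * exp (t * x)
            - h * (x ^ Suc k * exp (t * x)))"
      unfolding g_def
      by (rule Bochner_Integration.integral_cong) (auto simp: algebra_simps exp_add)
    also have "\<dots> = mom k (t + h) - mom k t - h * mom (Suc k) t"
      using i0 i1 i2 by (simp add: mom_def)
    finally have eq: "mom k (t + h) - mom k t - h * mom (Suc k) t = (LINT x|M. g x)" by simp
    have pw: "\<bar>g x\<bar> \<le> h\<^sup>2 * B x" for x
    proof -
      have "\<bar>exp (h * x) - 1 - h * x\<bar> \<le> (h * x)\<^sup>2 * exp \<bar>h * x\<bar>" by (rule exp_taylor2)
      also have "\<dots> \<le> (h * x)\<^sup>2 * exp (c * \<bar>x\<bar>)"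
        using h by (intro mult_left_mono) (auto simp: abs_mult mult_right_mono)
      finally have e: "\<bar>exp (h * x) - 1 - h * x\<bar> \<le> (h * x)\<^sup>2 * exp (c * \<bar>x\<bar>)" .
      have "\<bar>g x\<bar> = \<bar>x\<bar> ^ k * exp (t * x) * \<bar>exp (h * x) - 1 - h * x\<bar>"
        by (simp add: g_def abs_mult power_abs)
      also have "\<dots> \<le> \<bar>x\<bar> ^ k * exp (t * x) * ((h * x)\<^sup>2 * exp (c * \<bar>x\<bar>))"
        by (intro mult_left_mono e) auto
      also have "\<dots> = h\<^sup>2 * B x"
      proof -
        have "(h * x)\<^sup>2 = h\<^sup>2 * \<bar>x\<bar>\<^sup>2" by (simp add: power_mult_distrib power2_abs)
        moreover have "\<bar>x\<bar> ^ (k + 2) = \<bar>x\<bar> ^ k * \<bar>x\<bar>\<^sup>2" by (rule power_add)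
        ultimately show ?thesis unfolding B_def by (simp only: mult_ac)
      qed
      finally show ?thesis .
    qed
    have "\<bar>LINT x|M. g x\<bar> \<le> (LINT x|M. \<bar>g x\<bar>)"
      using integral_norm_bound[of M g] by simp
    also have "\<dots> \<le> (LINT x|M. h\<^sup>2 * B x)"
      using iB pw by (intro integral_mono') (auto simp: B_def)
    also have "\<dots> = C * h\<^sup>2" by (simp add: C_def)
    finally show ?thesis using eq by simp
  qed
  have C0: "C \<ge> 0" unfolding C_def B_def by (intro integral_nonneg_AE) auto
  show ?thesis
    unfolding DERIV_def
  proof (rule LIM_zero_cancel, rule Lim_null_comparison)
    show "\<forall>\<^sub>F h in at 0. norm ((mom k (t + h) - mom k t) / h - mom (Suc k) t) \<le> C * \<bar>h\<bar>"
    proof -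
      have "\<forall>\<^sub>F h in at 0. \<bar>h\<bar> < c \<and> h \<noteq> 0"
        using c by (auto simp: eventually_at intro!: exI[of _ c])
      then show ?thesis
      proof eventually_elim
        case (elim h)
        have "(mom k (t + h) - mom k t) / h - mom (Suc k) t
              = (mom k (t + h) - mom k t - h * mom (Suc k) t) / h"
          using elim by (simp add: field_simps)
        also have "\<bar>\<dots>\<bar> \<le> C * h\<^sup>2 / \<bar>h\<bar>"
          unfolding abs_divide using elim by (intro divide_right_mono key) auto
        also have "\<dots> = C * \<bar>h\<bar>"
        proof -
          have "h * h / \<bar>h\<bar> = \<bar>h\<bar>" using elim
            by (cases "h \<ge> 0") (auto simp: abs_of_nonneg abs_of_neg)
          moreover have "C * h\<^sup>2 / \<bar>h\<bar> = C * (h * h / \<bar>h\<bar>)"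
            by (simp add: power2_eq_square)
          ultimately show ?thesis by (simp only: times_divide_eq_right[symmetric])
        qed
        finally show ?case by simp
      qed
    qed
    show "((\<lambda>h. C * \<bar>h\<bar>) \<longlongrightarrow> 0) (at 0)"
      by (rule tendsto_eq_intros) (auto intro!: tendsto_eq_intros)
  qed
qed


lemma mom0_eq: "mom 0 t = (LINT x|M. exp (t * x))"
  by (simp add: mom_def)

lemma mom0_pos:
  assumes "t \<in> J_set M"
  shows "mom 0 t > 0"
proof -
  have i: "integrable M (\<lambda>x. exp (t * x))" using assms by (simp add: J_iff)
  have "(LINT x|M. exp (t * x)) \<ge> 0" by (intro integral_nonneg_AE) auto
  moreover have "(LINT x|M. exp (t * x)) \<noteq> 0"
  proof
    assume "(LINT x|M. exp (t * x)) = 0"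
    then have "AE x in M. exp (t * x) = 0"
      using integral_nonneg_eq_0_iff_AE[OF i] by auto
    then have "AE x in M. False" by simp
    then show False using AE_False by simp
  qed
  ultimately show ?thesis unfolding mom0_eq by linarith
qed

lemma wvar_pos:
  assumes "t - d \<in> J_set M" "t + d \<in> J_set M" "0 < d"
  shows "(LINT x|M. (x - m)\<^sup>2 * exp (t * x)) > 0"
proof -
  have i0: "integrable M (\<lambda>x. x ^ 0 * exp (t * x))"
    and i1: "integrable M (\<lambda>x. x ^ 1 * exp (t * x))"
    and i2: "integrable M (\<lambda>x. x ^ 2 * exp (t * x))"
    by (rule int_xk[OF assms])+
  have i: "integrable M (\<lambda>x. (x - m)\<^sup>2 * exp (t * x))"
  proof -
    have "integrable M (\<lambda>x. x ^ 2 * exp (t * x) - 2 * m * (x ^ 1 * exp (t * x)) + m\<^sup>2 * (x ^ 0 * exp (t * x)))"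
      using i0 i1 i2 by auto
    then show ?thesis
      by (rule back_subst[of "integrable M"]) (auto simp: power2_eq_square algebra_simps)
  qed
  have "(LINT x|M. (x - m)\<^sup>2 * exp (t * x)) \<ge> 0" by (intro integral_nonneg_AE) auto
  moreover have "(LINT x|M. (x - m)\<^sup>2 * exp (t * x)) \<noteq> 0"
  proof
    assume "(LINT x|M. (x - m)\<^sup>2 * exp (t * x)) = 0"
    then have "AE x in M. (x - m)\<^sup>2 * exp (t * x) = 0"
      using integral_nonneg_eq_0_iff_AE[OF i] by auto
    then have ae: "AE x in M. x = m" by eventually_elim simp
    then have "(LINT y|M. y) = (LINT y|M. m)"
      by (intro integral_cong_AE) (auto intro!: meas)
    then have Em: "(LINT y|M. y) = m" using prob_space by simp
    have "(LINT x|M. (x - (LINT y|M. y))\<^sup>2) = (LINT x|M. 0)"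
      unfolding Em using ae by (intro integral_cong_AE) (auto intro!: meas)
    then show False using var by simp
  qed
  ultimately show ?thesis by linarith
qed

lemma wvar_eq:
  assumes "t - d \<in> J_set M" "t + d \<in> J_set M" "0 < d"
  shows "(LINT x|M. (x - m)\<^sup>2 * exp (t * x)) = mom 2 t - 2 * m * mom 1 t + m\<^sup>2 * mom 0 t"
proof -
  have i0: "integrable M (\<lambda>x. x ^ 0 * exp (t * x))"
    and i1: "integrable M (\<lambda>x. x ^ 1 * exp (t * x))"
    and i2: "integrable M (\<lambda>x. x ^ 2 * exp (t * x))"
    by (rule int_xk[OF assms])+
  have "(LINT x|M. (x - m)\<^sup>2 * exp (t * x)) =
     (LINT x|M. x ^ 2 * exp (t * x) - 2 * m * (x ^ 1 * exp (t * x)) + m\<^sup>2 * (x ^ 0 * exp (t * x)))"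
    by (rule Bochner_Integration.integral_cong) (auto simp: power2_eq_square algebra_simps)
  also have "\<dots> = mom 2 t - 2 * m * mom 1 t + m\<^sup>2 * mom 0 t"
    using i0 i1 i2 unfolding mom_def by (simp del: power_one_right)
  finally show ?thesis .
qed

lemma mom1_neg: "mom 1 (- t) = - mom 1 t"
proof -
  have "(LINT x|M. (\<lambda>x. x * exp (t * x)) (- x)) = (LINT x|M. x * exp (t * x))"
    by (rule even_int(2)) simp
  then show ?thesis unfolding mom_def by simp
qed

lemma mom0_neg: "mom 0 (- t) = mom 0 t"
proof -
  have "(LINT x|M. (\<lambda>x. exp (t * x)) (- x)) = (LINT x|M. exp (t * x))"
    by (rule even_int(2)) simp
  then show ?thesis unfolding mom_def by simp
qed

lemma D_lt_xs:
  assumes "t - d \<in> J_set M" "t + d \<in> J_set M" "0 < d"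
  shows "ereal (mom 1 t / mom 0 t) < x_star M"
proof (cases "x_star M = \<infinity>")
  case True
  then show ?thesis by simp
next
  case False
  define c where "c = real_of_ereal (x_star M)"
  have xc: "x_star M = ereal c" using False xs_nonneg c_def
    by (cases "x_star M") auto
  have ae: "AE x in M. x < c" using AE_below False xc by simp
  have tJ: "t \<in> J_set M" using assms by (intro J_conv[OF assms(1) assms(2)]) auto
  have i0: "integrable M (\<lambda>x. x ^ 0 * exp (t * x))"
    and i1: "integrable M (\<lambda>x. x ^ 1 * exp (t * x))"
    by (rule int_xk[OF assms])+
  have eq: "(LINT x|M. (c - x) * exp (t * x)) = (LINT x|M. c * (x ^ 0 * exp (t * x)) - x ^ 1 * exp (t * x))"
    by (rule Bochner_Integration.integral_cong) (auto simp: algebra_simps)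
  have ib: "integrable M (\<lambda>x. (c - x) * exp (t * x))"
  proof -
    have "integrable M (\<lambda>x. c * (x ^ 0 * exp (t * x)) - x ^ 1 * exp (t * x))"
      using i0 i1 by auto
    then show ?thesis
      by (rule back_subst[of "integrable M"]) (auto simp: algebra_simps)
  qed
  have "(LINT x|M. (c - x) * exp (t * x)) \<ge> 0"
    using ae by (intro integral_nonneg_AE) (auto elim!: eventually_mono)
  moreover have "(LINT x|M. (c - x) * exp (t * x)) \<noteq> 0"
  proof
    assume "(LINT x|M. (c - x) * exp (t * x)) = 0"
    moreover have "AE x in M. 0 \<le> (c - x) * exp (t * x)"
      using ae by (auto elim!: eventually_mono)
    ultimately have "AE x in M. (c - x) * exp (t * x) = 0"
      using integral_nonneg_eq_0_iff_AE[OF ib] by blast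
    with ae have "AE x in M. False" by eventually_elim simp
    then show False using AE_False by simp
  qed
  ultimately have "c * mom 0 t - mom 1 t > 0"
    using eq i0 i1 unfolding mom_def by (simp del: power_one_right)
  then have "mom 1 t / mom 0 t < c"
    using mom0_pos[OF tJ] by (simp add: divide_less_eq mult.commute)
  then show ?thesis using xc by simp
qed


lemma mom00: "mom 0 0 = 1"
  using prob_space by (simp add: mom_def)

lemma Lam_eq: "Lambda M t = ln (mom 0 t)"
  by (simp add: Lambda_def mom0_eq)

end

locale mgf2 = mgf +
  assumes opn: "\<forall>t\<in>J_set M. ereal t < t_star M"
begin

lemma J_nbhd:
  assumes "t \<in> J_set M"
  shows "\<exists>d>0. t - d \<in> J_set M \<and> t + d \<in> J_set M"
proof -
  have "ereal t < Sup (ereal ` J_set M)" using opn assms unfolding t_star_def by blast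
  then obtain s where s: "s \<in> J_set M" "t < s" unfolding less_Sup_iff by auto
  have "ereal (- t) < Sup (ereal ` J_set M)" using opn J_neg[OF assms] unfolding t_star_def by blast
  then obtain s' where s': "s' \<in> J_set M" "- t < s'" unfolding less_Sup_iff by auto
  define d where "d = min (s - t) (t + s')"
  have "t - d \<in> J_set M" "t + d \<in> J_set M"
    using s s' by (intro J_conv[OF J_neg[OF s'(1)] s(1)]; auto simp: d_def)+
  moreover have "d > 0" using s s' by (simp add: d_def)
  ultimately show ?thesis by blast
qed

definition D :: "real \<Rightarrow> real" where "D t = mom 1 t / mom 0 t"
definition D2 :: "real \<Rightarrow> real" where
  "D2 t = (mom 2 t * mom 0 t - mom 1 t * mom 1 t) / (mom 0 t * mom 0 t)"

lemma mom_deriv': "t \<in> J_set M \<Longrightarrow> (mom k has_real_derivative mom (Suc k) t) (at t)"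
proof -
  assume "t \<in> J_set M"
  then obtain d where "d > 0" "t - d \<in> J_set M" "t + d \<in> J_set M" using J_nbhd by blast
  then show ?thesis by (intro mom_deriv)
qed

lemma Lam_deriv:
  assumes "t \<in> J_set M"
  shows "(Lambda M has_real_derivative D t) (at t)"
proof -
  have "((\<lambda>t. ln (mom 0 t)) has_real_derivative 1 / mom 0 t * mom 1 t) (at t)"
    using mom_deriv'[OF assms, of 0] mom0_pos[OF assms]
    by (intro DERIV_chain2[OF DERIV_ln_divide]) auto
  then show ?thesis unfolding D_def using Lam_eq[abs_def] by (simp add: Lam_eq[abs_def])
qed

lemma deriv_eq: "t \<in> J_set M \<Longrightarrow> deriv (Lambda M) t = D t"
  using Lam_deriv DERIV_imp_deriv by blast

lemma D_deriv:
  assumes "t \<in> J_set M"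
  shows "(D has_real_derivative D2 t) (at t)"
proof -
  have a: "(mom 1 has_real_derivative mom 2 t) (at t)"
    using mom_deriv'[OF assms, of 1] by (simp add: numeral_2_eq_2)
  have b: "(mom 0 has_real_derivative mom 1 t) (at t)"
    using mom_deriv'[OF assms, of 0] by simp
  have "((\<lambda>t. mom 1 t / mom 0 t) has_real_derivative
      (mom 2 t * mom 0 t - mom 1 t * mom 1 t) / (mom 0 t * mom 0 t)) (at t)"
    using DERIV_divide[OF a b] mom0_pos[OF assms] by simp
  then show ?thesis unfolding D_def[abs_def] D2_def .
qed

lemma D2_pos:
  assumes "t \<in> J_set M"
  shows "D2 t > 0"
proof -
  obtain d where d: "d > 0" "t - d \<in> J_set M" "t + d \<in> J_set M" using J_nbhd[OF assms] by blast
  define m where "m = mom 1 t / mom 0 t"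
  have p: "mom 0 t > 0" using mom0_pos[OF assms] .
  have "mom 2 t - 2 * m * mom 1 t + m\<^sup>2 * mom 0 t > 0"
    using wvar_pos[OF d(2,3,1), of m] wvar_eq[OF d(2,3,1), of m] by simp
  then have "mom 2 t - mom 1 t * mom 1 t / mom 0 t > 0"
    using p by (simp add: m_def power2_eq_square field_simps)
  then have "mom 2 t * mom 0 t - mom 1 t * mom 1 t > 0"
    using p by (simp add: field_simps)
  then show ?thesis using p by (simp add: D2_def)
qed

lemma dD_deriv:
  assumes "t \<in> J_set M"
  shows "(deriv (Lambda M) has_real_derivative D2 t) (at t)"
proof -
  obtain d where d: "d > 0" "t - d \<in> J_set M" "t + d \<in> J_set M" using J_nbhd[OF assms] by blast
  show ?thesis
  proof (rule has_field_derivative_transform_within_open[OF D_deriv[OF assms], of "{t - d<..<t + d}"])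
    show "t \<in> {t - d<..<t + d}" using d by simp
    fix x assume "x \<in> {t - d<..<t + d}"
    then have "x \<in> J_set M" using d by (auto intro!: J_conv[OF d(2) d(3)])
    then show "D x = deriv (Lambda M) x" using deriv_eq by simp
  qed simp
qed

lemma D_smono:
  assumes "s \<in> J_set M" "u \<in> J_set M" "s < u"
  shows "deriv (Lambda M) s < deriv (Lambda M) u"
proof -
  have "\<exists>z. s < z \<and> z < u \<and> deriv (Lambda M) u - deriv (Lambda M) s = (u - s) * D2 z"
  proof (rule MVT2[OF assms(3), of "deriv (Lambda M)" D2])
    fix x assume "s \<le> x" "x \<le> u"
    then show "(deriv (Lambda M) has_real_derivative D2 x) (at x)"
      by (intro dD_deriv J_conv[OF assms(1,2)])
  qed
  then obtain z where z: "s < z" "z < u" "deriv (Lambda M) u - deriv (Lambda M) s = (u - s) * D2 z"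
    by blast
  have "z \<in> J_set M" using z assms by (auto intro!: J_conv[OF assms(1,2)])
  then have "D2 z > 0" by (rule D2_pos)
  then have "(u - s) * D2 z > 0" using z by simp
  then show ?thesis using z by linarith
qed

lemma D_cont: "continuous_on (J_set M) (deriv (Lambda M))"
  by (rule continuous_at_imp_continuous_on, rule ballI, rule DERIV_isCont, rule dD_deriv)

lemma D_odd:
  assumes "t \<in> J_set M"
  shows "deriv (Lambda M) (- t) = - deriv (Lambda M) t"
  using deriv_eq[OF assms] deriv_eq[OF J_neg[OF assms]] mom1_neg[of t]
  by (simp add: D_def mom0_neg)

lemma D_zero: "deriv (Lambda M) 0 = 0"
  using D_odd[OF J0] by simp

lemma D_upper:
  assumes "t \<in> J_set M"
  shows "ereal (deriv (Lambda M) t) < x_star M"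
proof -
  obtain d where d: "d > 0" "t - d \<in> J_set M" "t + d \<in> J_set M" using J_nbhd[OF assms] by blast
  show ?thesis using D_lt_xs[OF d(2,3,1)] deriv_eq[OF assms] by (simp add: D_def)
qed

lemma D_lower:
  assumes "t \<in> J_set M"
  shows "- x_star M < ereal (deriv (Lambda M) t)"
proof -
  have "ereal (deriv (Lambda M) (- t)) < x_star M" using D_upper[OF J_neg[OF assms]] .
  then have "- ereal (deriv (Lambda M) t) < x_star M" using D_odd[OF assms] by simp
  then show ?thesis by (metis ereal_uminus_less_reorder uminus_ereal.simps(1))
qed

lemma Lam0: "Lambda M 0 = 0"
  by (simp add: Lam_eq mom00)

lemma Lam_le:
  assumes "t \<in> J_set M" "0 < t"
  shows "Lambda M t \<le> t * deriv (Lambda M) t"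
proof -
  have "\<exists>z. 0 < z \<and> z < t \<and> Lambda M t - Lambda M 0 = (t - 0) * deriv (Lambda M) z"
  proof (rule MVT2[OF assms(2)])
    fix x assume "0 \<le> x" "x \<le> t"
    then have "x \<in> J_set M" by (intro J_conv[OF J0 assms(1)])
    then show "(Lambda M has_real_derivative deriv (Lambda M) x) (at x)"
      using Lam_deriv deriv_eq by simp
  qed
  then obtain z where z: "0 < z" "z < t" "Lambda M t - Lambda M 0 = (t - 0) * deriv (Lambda M) z"
    by blast
  have "z \<in> J_set M" using z assms by (auto intro!: J_conv[OF J0 assms(1)])
  then have "deriv (Lambda M) z < deriv (Lambda M) t" using D_smono z assms by blast
  then show ?thesis using z assms by (simp add: Lam0)
qed

lemma Lam_mono:
  assumes "t \<in> J_set M" "0 \<le> s" "s < t"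
  shows "Lambda M s \<le> Lambda M t"
proof -
  have sJ: "s \<in> J_set M" using assms by (auto intro!: J_conv[OF J0 assms(1)])
  have "\<exists>z. s < z \<and> z < t \<and> Lambda M t - Lambda M s = (t - s) * deriv (Lambda M) z"
  proof (rule MVT2[OF assms(3)])
    fix x assume "s \<le> x" "x \<le> t"
    then have "x \<in> J_set M" by (intro J_conv[OF sJ assms(1)])
    then show "(Lambda M has_real_derivative deriv (Lambda M) x) (at x)"
      using Lam_deriv deriv_eq by simp
  qed
  then obtain z where z: "s < z" "z < t" "Lambda M t - Lambda M s = (t - s) * deriv (Lambda M) z"
    by blast
  have "z \<in> J_set M" using z assms sJ by (auto intro!: J_conv[OF sJ assms(1)])
  then have "deriv (Lambda M) 0 < deriv (Lambda M) z" using D_smono z assms J0 by auto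
  then have "(t - s) * deriv (Lambda M) z > 0" using z by (simp add: D_zero)
  then show ?thesis using z by linarith
qed

end


context mgf begin

lemma mom0_lower:
  assumes "t \<in> J_set M" "0 \<le> t"
  shows "exp (t * a) * measure M {a..} \<le> mom 0 t"
proof -
  have i: "integrable M (\<lambda>x. exp (t * x))" using assms by (simp add: J_iff)
  have ii: "integrable M (\<lambda>x. indicator {a..} x * exp (t * a))"
    by (intro integrable_mult_left integrable_real_indicator) (auto intro!: setsM simp: emeasure_eq_measure)
  have "(LINT x|M. indicator {a..} x * exp (t * a)) \<le> (LINT x|M. exp (t * x))"
  proof (rule integral_mono[OF ii i])
    fix x
    show "indicator {a..} x * exp (t * a) \<le> exp (t * x)"
      using assms(2) by (auto simp: indicator_def mult_left_mono)
  qed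
  moreover have "(LINT x|M. indicator {a..} x * exp (t * a)) = measure M {a..} * exp (t * a)"
    by (simp add: sp)
  ultimately show ?thesis by (simp add: mom0_eq mult.commute)
qed

lemma J_univ_fin:
  assumes "x_star M < \<infinity>"
  shows "J_set M = UNIV"
proof -
  define c where "c = real_of_ereal (x_star M)"
  have xc: "x_star M = ereal c" using assms xs_nonneg c_def
    by (cases "x_star M") auto
  have ae: "AE x in M. x < c" using AE_below assms xc by simp
  have pos: "t \<in> J_set M" if t: "0 \<le> t" for t
    unfolding J_iff
  proof (rule Bochner_Integration.integrable_bound)
    show "integrable M (\<lambda>x. exp (t * c))" by simp
    show "(\<lambda>x. exp (t * x)) \<in> borel_measurable M" by (intro meas) simp
    show "AE x in M. norm (exp (t * x)) \<le> norm (exp (t * c))"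
      using ae by eventually_elim (use t in \<open>auto intro!: mult_left_mono\<close>)
  qed
  have "t \<in> J_set M" for t
  proof (cases "t \<ge> 0")
    case True then show ?thesis by (rule pos)
  next
    case False
    then have "- t \<in> J_set M" by (intro pos) simp
    then show ?thesis using J_neg by fastforce
  qed
  then show ?thesis by auto
qed

end

context mgf2 begin

lemma Lam_unbdd:
  assumes nT: "T \<notin> J_set M" and sub: "\<And>t. 0 \<le> t \<Longrightarrow> t < T \<Longrightarrow> t \<in> J_set M" and T: "T > 0"
  shows "\<exists>t. 0 \<le> t \<and> t < T \<and> B < Lambda M t"
proof (rule ccontr)
  assume "\<not> ?thesis"
  then have bnd: "Lambda M t \<le> B" if "0 \<le> t" "t < T" for t using that by force
  define s where "s = (\<lambda>n::nat. T - T / (2 + real n))"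
  have s: "0 \<le> s n" "s n < T" for n
    using T by (auto simp: s_def field_simps)
  have sJ: "s n \<in> J_set M" for n using sub s by blast
  have mb: "mom 0 (s n) \<le> exp B" for n
  proof -
    have "ln (mom 0 (s n)) \<le> B" using bnd[OF s] Lam_eq by simp
    then show ?thesis using mom0_pos[OF sJ] by (metis exp_ln exp_le_cancel_iff) 
  qed
  have slim: "s \<longlonglongrightarrow> T"
  proof -
    have "(\<lambda>n::nat. T / (2 + real n)) \<longlonglongrightarrow> 0"
      by (rule real_tendsto_divide_at_top[OF tendsto_const
          filterlim_tendsto_add_at_top[OF tendsto_const filterlim_real_sequentially]])
    then have "(\<lambda>n. T - T / (2 + real n)) \<longlonglongrightarrow> T - 0"
      by (intro tendsto_intros)
    then show ?thesis by (simp add: s_def)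
  qed
  have meas': "\<And>n. (\<lambda>x. ennreal (exp (s n * x))) \<in> borel_measurable M"
    by (intro meas) simp
  have "(\<integral>\<^sup>+ x. liminf (\<lambda>n. ennreal (exp (s n * x))) \<partial>M) \<le> liminf (\<lambda>n. \<integral>\<^sup>+ x. ennreal (exp (s n * x)) \<partial>M)"
    by (rule nn_integral_liminf[OF meas'])
  moreover have "liminf (\<lambda>n. ennreal (exp (s n * x))) = ennreal (exp (T * x))" for x
  proof (rule lim_imp_Liminf)
    show "((\<lambda>n. ennreal (exp (s n * x))) \<longlongrightarrow> ennreal (exp (T * x))) sequentially"
      by (intro tendsto_ennrealI tendsto_intros slim)
  qed simp
  moreover have "(\<integral>\<^sup>+ x. ennreal (exp (s n * x)) \<partial>M) = ennreal (mom 0 (s n))" for n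
    using sJ[of n] by (simp add: mom0_eq J_iff nn_integral_eq_integral)
  moreover have "liminf (\<lambda>n. ennreal (mom 0 (s n))) \<le> ennreal (exp B)"
  proof -
    have "liminf (\<lambda>n. ennreal (mom 0 (s n))) \<le> limsup (\<lambda>n. ennreal (mom 0 (s n)))"
      by (rule Liminf_le_Limsup) simp
    also have "\<dots> \<le> ennreal (exp B)"
      by (intro Limsup_bounded always_eventually allI) (simp add: mb ennreal_leI)
    finally show ?thesis .
  qed
  ultimately have "(\<integral>\<^sup>+ x. ennreal (exp (T * x)) \<partial>M) \<le> ennreal (exp B)" by simp
  then have lt: "(\<integral>\<^sup>+ x. ennreal (exp (T * x)) \<partial>M) < \<top>"
    using ennreal_less_top[of "exp B"] by (rule order.strict_trans1)
  have "integrable M (\<lambda>x. exp (T * x))"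
    by (rule integrableI_bounded) (use lt in \<open>auto intro!: meas\<close>)
  then show False using nT by (simp add: J_iff)
qed

end


context mgf begin

lemma tail_to_0:
  assumes TJ: "T \<in> J_set M" and T: "T > 0"
  shows "(\<lambda>n::nat. exp (T * real n) * measure M {real n..}) \<longlonglongrightarrow> 0"
proof -
  have i: "integrable M (\<lambda>x. exp (T * x))" using TJ by (simp add: J_iff)
  define I where "I = (\<lambda>n::nat. LINT x|M. indicator {real n..} x * exp (T * x))"
  have ii: "integrable M (\<lambda>x. indicator {real n..} x * exp (T * real n))" for n
    by (intro integrable_mult_left integrable_real_indicator) (auto intro!: setsM simp: emeasure_eq_measure)
  have ij: "integrable M (\<lambda>x. indicator {real n..} x * exp (T * x))" for n
  proof (rule Bochner_Integration.integrable_bound[OF i])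
    show "(\<lambda>x. indicator {real n..} x * exp (T * x)) \<in> borel_measurable M"
      by (intro meas) simp
    show "AE x in M. norm (indicator {real n..} x * exp (T * x) :: real) \<le> norm (exp (T * x))"
      by (intro AE_I2) (auto simp: indicator_def)
  qed
  have le: "exp (T * real n) * measure M {real n..} \<le> I n" for n
  proof -
    have "(LINT x|M. indicator {real n..} x * exp (T * real n)) \<le> I n"
      unfolding I_def
    proof (rule integral_mono[OF ii ij])
      fix x
      show "indicator {real n..} x * exp (T * real n) \<le> indicator {real n..} x * exp (T * x)"
        using T by (auto simp: indicator_def)
    qed
    moreover have "(LINT x|M. indicator {real n..} x * exp (T * real n)) = measure M {real n..} * exp (T * real n)"
      by (simp add: sp)
    ultimately show ?thesis by (simp add: mult.commute)
  qed
  have "I \<longlonglongrightarrow> (LINT x|M. (0::real))"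
    unfolding I_def
  proof (rule integral_dominated_convergence[OF _ _ i])
    show "(\<lambda>x. 0::real) \<in> borel_measurable M" by simp
    show "(\<lambda>x. indicator {real n..} x * exp (T * x)) \<in> borel_measurable M" for n
      by (intro meas) simp
    show "AE x in M. (\<lambda>n. indicator {real n..} x * exp (T * x)) \<longlonglongrightarrow> (0::real)"
    proof (intro AE_I2 tendsto_eventually)
      fix x :: real
      obtain N :: nat where "x < real N" using reals_Archimedean2 by blast
      then show "\<forall>\<^sub>F n in sequentially. indicator {real n..} x * exp (T * x) = (0::real)"
        unfolding eventually_sequentially
        by (intro exI[of _ N]) (auto simp: indicator_def)
    qed
    show "AE x in M. norm (indicator {real n..} x * exp (T * x)) \<le> exp (T * x)" for n
      by (intro AE_I2) (auto simp: indicator_def)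
  qed
  then have I0: "I \<longlonglongrightarrow> 0" by simp
  show ?thesis
    by (rule tendsto_sandwich[OF _ _ tendsto_const I0]) (auto intro!: always_eventually le)
qed

lemma ls_sets:
  fixes l y :: real
  assumes "0 < l" "l < 1"
  shows "{l * a + (1 - l) * b | a b. a \<in> {y..} \<and> b \<in> {0..}} = {l * y..}"
proof (intro equalityI subsetI)
  fix z assume "z \<in> {l * a + (1 - l) * b | a b. a \<in> {y..} \<and> b \<in> {0..}}"
  then obtain a b where ab: "z = l * a + (1 - l) * b" "a \<ge> y" "b \<ge> 0" by auto
  have "l * y \<le> l * a" using ab assms by (intro mult_left_mono) auto
  moreover have "0 \<le> (1 - l) * b" using ab assms by simp
  ultimately show "z \<in> {l * y..}" using ab by simp
next
  fix z assume z: "z \<in> {l * y..}"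
  define d where "d = z - l * y"
  have "z = l * (y + d) + (1 - l) * (0 + d)" by (simp add: d_def algebra_simps)
  moreover have "y + d \<in> {y..}" "0 + d \<in> {0..}" using z by (auto simp: d_def)
  ultimately show "z \<in> {l * a + (1 - l) * b | a b. a \<in> {y..} \<and> b \<in> {0..}}" by blast
qed

lemma int_from_tail:
  assumes u: "0 < u" "u < s" and y0: "0 \<le> y0"
    and tail: "\<And>y. y0 \<le> y \<Longrightarrow> measure M {y..} \<le> exp (- s * y)"
  shows "u \<in> J_set M"
proof -
  define h where "h = (\<lambda>(k::nat) x. ennreal (exp (u * (y0 + k + 1))) * indicator {y0 + k..} x)"
  define c where "c = ennreal (exp (u * y0))"
  have pw: "ennreal (exp (u * x)) \<le> c + (\<Sum>k. h k x)" for x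
  proof (cases "x < y0")
    case True
    then have "exp (u * x) \<le> exp (u * y0)" using u by simp
    then have "ennreal (exp (u * x)) \<le> c" by (simp add: c_def ennreal_leI)
    then show ?thesis by (rule add_increasing2[rotated]) simp
  next
    case False
    define k0 where "k0 = nat \<lfloor>x - y0\<rfloor>"
    have k0: "y0 + k0 \<le> x" "x < y0 + k0 + 1" using False
      by (auto simp: k0_def) linarith+
    have "exp (u * x) \<le> exp (u * (y0 + k0 + 1))" using k0 u by simp
    then have "ennreal (exp (u * x)) \<le> h k0 x" using k0 by (simp add: h_def ennreal_leI)
    also have "h k0 x = sum (\<lambda>k. h k x) {k0}" by simp
    also have "\<dots> \<le> (\<Sum>k. h k x)" by (intro sum_le_suminf) auto
    finally show ?thesis by (rule add_increasing[rotated]) simp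
  qed
  define b where "b = (\<lambda>k::nat. exp (u + (u - s) * y0) * exp (u - s) ^ k)"
  have bsum: "summable b" unfolding b_def
    using u by (intro summable_mult summable_geometric) simp
  have hb: "(\<integral>\<^sup>+ x. h k x \<partial>M) \<le> ennreal (b k)" for k
  proof -
    have "(\<integral>\<^sup>+ x. h k x \<partial>M) = ennreal (exp (u * (y0 + k + 1))) * emeasure M {y0 + k..}"
      unfolding h_def by (rule nn_integral_cmult_indicator) (auto intro!: setsM)
    also have "\<dots> = ennreal (exp (u * (y0 + k + 1)) * measure M {y0 + k..})"
      by (simp add: emeasure_eq_measure ennreal_mult'')
    also have "\<dots> \<le> ennreal (exp (u * (y0 + k + 1)) * exp (- s * (y0 + k)))"
      using tail[of "y0 + k"] by (intro ennreal_leI mult_left_mono) auto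
    also have "exp (u * (y0 + k + 1)) * exp (- s * (y0 + k)) = b k"
    proof -
      have "exp (u - s) ^ k = exp (real k * (u - s))" by (simp add: exp_of_nat_mult)
      then show ?thesis unfolding b_def
        by (simp add: exp_add[symmetric] algebra_simps)
    qed
    finally show ?thesis .
  qed
  have e1: "(\<integral>\<^sup>+ x. ennreal (exp (u * x)) \<partial>M) \<le> (\<integral>\<^sup>+ x. c + (\<Sum>k. h k x) \<partial>M)"
    by (intro nn_integral_mono pw)
  have e2: "(\<integral>\<^sup>+ x. c + (\<Sum>k. h k x) \<partial>M) = (\<integral>\<^sup>+ x. c \<partial>M) + (\<integral>\<^sup>+ x. (\<Sum>k. h k x) \<partial>M)"
    by (rule nn_integral_add) (auto intro!: meas borel_measurable_suminf simp: h_def)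
  have e3: "(\<integral>\<^sup>+ x. (\<Sum>k. h k x) \<partial>M) = (\<Sum>k. \<integral>\<^sup>+ x. h k x \<partial>M)"
    by (rule nn_integral_suminf) (auto intro!: meas simp: h_def)
  have e4: "(\<Sum>k. \<integral>\<^sup>+ x. h k x \<partial>M) \<le> (\<Sum>k. ennreal (b k))"
    by (intro suminf_le hb) auto
  have e5: "(\<Sum>k. ennreal (b k)) = ennreal (suminf b)"
    using bsum by (intro suminf_ennreal2) (auto simp: b_def)
  have e6: "(\<integral>\<^sup>+ x. c \<partial>M) = c" using emeasure_space_1 by simp
  have le: "(\<integral>\<^sup>+ x. ennreal (exp (u * x)) \<partial>M) \<le> c + ennreal (suminf b)"
    using e1 e2 e3 e4 e5 e6 by (metis add_left_mono order_trans)
  have "c + ennreal (suminf b) < \<top>" unfolding c_def by (simp add: ennreal_add_less_top)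
  with le have fin: "(\<integral>\<^sup>+ x. ennreal (exp (u * x)) \<partial>M) < \<top>"
    by (rule order.strict_trans1)
  have "integrable M (\<lambda>x. exp (u * x))"
    by (rule integrableI_bounded) (use fin in \<open>auto intro!: meas\<close>)
  then show ?thesis by (simp add: J_iff)
qed

end


context mgf begin

lemma LC:
  assumes xinf: "x_star M = \<infinity>" and lc: "log_concave_measure M"
    and TJ: "T \<in> J_set M" and T: "T > 0"
  shows "\<exists>u>T. u \<in> J_set M"
proof -
  define G where "G = (\<lambda>y. measure M {y..})"
  have Gpos: "G y > 0" for y using xs_pos xinf by (simp add: G_def)
  have Gne: "G y \<noteq> 0" for y using Gpos[of y] by simp
  have G1: "G y \<le> 1" for y unfolding G_def by (rule prob_le_1)
  have lim: "(\<lambda>n::nat. exp (T * real n) * G (real n)) \<longlonglongrightarrow> 0"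
    using tail_to_0[OF TJ T] by (simp add: G_def)
  have "\<forall>\<^sub>F n in sequentially. exp (T * real n) * G (real n) < G 0"
    using order_tendstoD(2)[OF lim Gpos[of 0]] .
  moreover have "\<forall>\<^sub>F n in sequentially. (1::nat) \<le> n" by (rule eventually_ge_at_top)
  ultimately have "\<forall>\<^sub>F n in sequentially. exp (T * real n) * G (real n) < G 0 \<and> 1 \<le> n"
    by eventually_elim simp
  then obtain N :: nat where N: "exp (T * real N) * G (real N) < G 0" "1 \<le> N"
    using eventually_sequentially by auto
  define y0 where "y0 = real N"
  have y0: "y0 \<ge> 1" using N by (simp add: y0_def)
  define s where "s = (ln (G 0) - ln (G y0)) / y0"
  have "ln (exp (T * y0) * G y0) < ln (G 0)"
    using N Gpos by (simp add: y0_def)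
  then have "T * y0 + ln (G y0) < ln (G 0)"
    using Gpos[of y0] by (simp add: ln_mult)
  then have sT: "T < s" using y0 by (simp add: s_def field_simps)
  have LG0: "ln (G 0) \<le> 0" using G1 Gpos by simp
  have tail: "G y \<le> exp (- s * y)" if y: "y0 \<le> y" for y
  proof -
    have "ln (G y) \<le> ln (G 0) - s * y"
    proof (cases "y = y0")
      case True
      then show ?thesis using y0 by (simp add: s_def field_simps)
    next
      case False
      then have yy: "y0 < y" using y by simp
      define l where "l = y0 / y"
      have l: "0 < l" "l < 1" using yy y0 by (auto simp: l_def field_simps)
      have ly: "l * y = y0" using yy y0 by (simp add: l_def)
      have sets: "{l * a + (1 - l) * b | a b. a \<in> {y..} \<and> b \<in> {0..}} = {y0..}"
        using ls_sets[OF l, of y] ly by simp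
      have "measure M {l * a + (1 - l) * b | a b. a \<in> {y..} \<and> b \<in> {0..}}
              \<ge> measure M {y..} powr l * measure M {0..} powr (1 - l)"
        using lc[unfolded log_concave_measure_def, rule_format, of "{y..}" "{0..}" l] l
        unfolding sets by simp
      then have ineq: "G y powr l * G 0 powr (1 - l) \<le> G y0" using sets by (simp add: G_def)
      have "ln (G y powr l * G 0 powr (1 - l)) \<le> ln (G y0)"
      proof -
        have pp: "0 < G y powr l * G 0 powr (1 - l)"
          using Gpos[of y] Gpos[of 0] by (intro mult_pos_pos) auto
        show ?thesis by (rule ln_le_cancel_iff[THEN iffD2]) (use pp Gpos ineq in auto)
      qed
      then have "l * ln (G y) + (1 - l) * ln (G 0) \<le> ln (G y0)"
        using Gne by (simp add: ln_mult ln_powr)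
      moreover have sy: "s * y0 = ln (G 0) - ln (G y0)" using y0 by (simp add: s_def)
      moreover have "l * (ln (G 0) - s * y) = l * ln (G 0) - s * (l * y)" by (simp add: algebra_simps)
      moreover have "(1 - l) * ln (G 0) = ln (G 0) - l * ln (G 0)" by (simp add: algebra_simps)
      ultimately have "l * ln (G y) \<le> l * (ln (G 0) - s * y)"
        using ly by simp
      then show ?thesis using l by simp
    qed
    also have "\<dots> \<le> - s * y" using LG0 by simp
    finally have "ln (G y) \<le> - s * y" .
    then have "exp (ln (G y)) \<le> exp (- s * y)" by simp
    then show ?thesis using Gpos by simp
  qed
  define u where "u = (T + s) / 2"
  have "u \<in> J_set M"
    using T sT y0 tail by (intro int_from_tail[of u s y0]) (auto simp: u_def G_def)
  moreover have "u > T" using sT by (simp add: u_def)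
  ultimately show ?thesis by blast
qed

end


context mgf2 begin

lemma t_pos: "t_star M > 0"
proof -
  obtain r where r: "r > 0" "\<forall>t. \<bar>t\<bar> < r \<longrightarrow> integrable M (\<lambda>x. exp (t * x))" using rr by blast
  have "r / 2 \<in> J_set M" using r(2)[rule_format, of "r / 2"] r(1) by (simp add: J_iff)
  then have "ereal (r / 2) \<le> t_star M" unfolding t_star_def by (intro Sup_upper imageI)
  moreover have "ereal 0 < ereal (r / 2)" using r by simp
  ultimately show ?thesis using zero_ereal_def by (metis order.strict_trans2)
qed

lemma J_char: "J_set M = {t. - t_star M < ereal t \<and> ereal t < t_star M}"
proof (intro equalityI subsetI)
  fix t assume t: "t \<in> J_set M"
  have "ereal t < t_star M" using opn t by blast
  moreover have "ereal (- t) < t_star M" using opn J_neg[OF t] by blast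
  then have "- t_star M < ereal t" by (metis ereal_uminus_less_reorder uminus_ereal.simps(1))
  ultimately show "t \<in> {t. - t_star M < ereal t \<and> ereal t < t_star M}" by simp
next
  fix t assume "t \<in> {t. - t_star M < ereal t \<and> ereal t < t_star M}"
  then have t: "- t_star M < ereal t" "ereal t < t_star M" by auto
  obtain s where s: "s \<in> J_set M" "t < s" using t(2) unfolding t_star_def less_Sup_iff by auto
  have "ereal (- t) < t_star M" using t(1) by (metis ereal_uminus_less_reorder uminus_ereal.simps(1))
  then obtain s' where s': "s' \<in> J_set M" "- t < s'" unfolding t_star_def less_Sup_iff by auto
  show "t \<in> J_set M"
    using s s' by (intro J_conv[OF J_neg[OF s'(1)] s(1)]) auto
qed

lemma lam_lower:
  assumes "t \<in> J_set M" "0 < t"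
  shows "Lambda M t \<le> t * deriv (Lambda M) t"
  using Lam_le[OF assms] .

lemma ev_J:
  "eventually (\<lambda>t. t \<in> J_set M) (if t_star M = \<infinity> then at_top else at_left (real_of_ereal (t_star M)))"
proof (cases "t_star M = \<infinity>")
  case True
  then have "J_set M = UNIV" using J_char by auto
  then show ?thesis using True by simp
next
  case False
  define T where "T = real_of_ereal (t_star M)"
  have tT: "t_star M = ereal T" using False t_pos T_def by (cases "t_star M") auto
  have T: "T > 0" using t_pos tT by simp
  have "eventually (\<lambda>x. x \<in> {0<..<T}) (at_left T)" using T by (rule eventually_at_left_real)
  then have "eventually (\<lambda>x. x \<in> J_set M) (at_left T)"
    by eventually_elim (auto simp: J_char tT)
  then show ?thesis using False T_def by simp
qed

lemma ev_big:
  assumes a: "ereal a < x_star M"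
  shows "eventually (\<lambda>t. a < deriv (Lambda M) t) (if t_star M = \<infinity> then at_top else at_left (real_of_ereal (t_star M)))"
proof (cases "t_star M = \<infinity>")
  case True
  then have JU: "J_set M = UNIV" using J_char by auto
  obtain a' where a': "ereal a < ereal a'" "ereal a' < x_star M" using ereal_dense2[OF a] by blast
  define p where "p = measure M {a'..}"
  have p: "p > 0" using xs_pos[OF a'(2)] by (simp add: p_def)
  have p1: "p \<le> 1" unfolding p_def by (rule prob_le_1)
  have aa: "a < a'" using a' by simp
  define K where "K = max 1 (- ln p / (a' - a) + 1)"
  have "eventually (\<lambda>t. t > K) at_top" by (rule eventually_gt_at_top)
  then have "eventually (\<lambda>t. a < deriv (Lambda M) t) at_top"
  proof eventually_elim
    case (elim t)
    have t0: "t > 0" using elim by (simp add: K_def)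
    have h: "- ln p / (a' - a) < t" using elim by (simp add: K_def)
    have d: "a' - a > 0" using aa by simp
    have "- ln p < t * (a' - a)" using h pos_divide_less_eq[OF d] by blast
    then have lt: "t * a < t * a' + ln p" by (simp add: algebra_simps)
    have "exp (t * a') * p \<le> mom 0 t" using mom0_lower[of t a'] JU t0 by (simp add: p_def)
    then have "ln (exp (t * a') * p) \<le> ln (mom 0 t)"
      using p mom0_pos[of t] JU by (subst ln_le_cancel_iff) auto
    then have "t * a' + ln p \<le> Lambda M t" using p by (simp add: Lam_eq ln_mult)
    also have "\<dots> \<le> t * deriv (Lambda M) t" using lam_lower[of t] JU t0 by simp
    finally have "t * a < t * deriv (Lambda M) t" using lt by simp
    then show ?case using t0 by simp
  qed
  then show ?thesis using True by simp
next
  case False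
  define T where "T = real_of_ereal (t_star M)"
  have tT: "t_star M = ereal T" using False t_pos T_def by (cases "t_star M") auto
  have T: "T > 0" using t_pos tT by simp
  have nT: "T \<notin> J_set M" using J_char tT by simp
  have sub: "t \<in> J_set M" if "0 \<le> t" "t < T" for t using that T by (simp add: J_char tT)
  obtain t0 where t0: "0 \<le> t0" "t0 < T" "\<bar>a\<bar> * T < Lambda M t0"
    using Lam_unbdd[OF nT sub T, of "\<bar>a\<bar> * T"] by blast
  have "eventually (\<lambda>x. x \<in> {t0<..<T}) (at_left T)" using t0 by (intro eventually_at_left_real)
  then have "eventually (\<lambda>t. a < deriv (Lambda M) t) (at_left T)"
  proof eventually_elim
    case (elim t)
    then have t: "t0 < t" "t < T" by auto
    have tJ: "t \<in> J_set M" using t t0 sub by simp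
    have "Lambda M t0 \<le> Lambda M t" using Lam_mono[OF tJ t0(1) t(1)] .
    then have "\<bar>a\<bar> * T < t * deriv (Lambda M) t" using t0 lam_lower[OF tJ] t by linarith
    moreover have "\<bar>a\<bar> * t \<le> \<bar>a\<bar> * T" using t by (intro mult_left_mono) auto
    ultimately have "t * \<bar>a\<bar> < t * deriv (Lambda M) t" by (simp add: mult.commute)
    then have "\<bar>a\<bar> < deriv (Lambda M) t" using t t0 by (simp add: mult_less_cancel_left)
    then show ?case by linarith
  qed
  then show ?thesis using False T_def by simp
qed

lemma tend_pos:
  assumes J: "eventually (\<lambda>t. t \<in> J_set M) F"
    and big: "\<And>a. ereal a < x_star M \<Longrightarrow> eventually (\<lambda>t. a < deriv (Lambda M) t) F"
  shows "((\<lambda>t. ereal (deriv (Lambda M) t)) \<longlongrightarrow> x_star M) F"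
  unfolding order_tendsto_iff
proof safe
  fix l assume l: "l < x_star M"
  obtain z where z: "l < ereal z" "ereal z < x_star M" using ereal_dense2[OF l] by blast
  show "eventually (\<lambda>t. l < ereal (deriv (Lambda M) t)) F"
    using big[OF z(2)] by eventually_elim (rule less_trans[OF z(1)], simp)
next
  fix u assume u: "x_star M < u"
  show "eventually (\<lambda>t. ereal (deriv (Lambda M) t) < u) F"
    using J by eventually_elim (use D_upper u in \<open>blast intro: less_trans\<close>)
qed

lemma tend_neg:
  assumes J: "eventually (\<lambda>t. t \<in> J_set M) F"
    and big: "\<And>a. ereal a < x_star M \<Longrightarrow> eventually (\<lambda>t. a < deriv (Lambda M) t) F"
  shows "((\<lambda>t. ereal (deriv (Lambda M) t)) \<longlongrightarrow> - x_star M) (filtermap uminus F)"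
  unfolding order_tendsto_iff eventually_filtermap
proof safe
  fix l assume l: "l < - x_star M"
  show "eventually (\<lambda>t. l < ereal (deriv (Lambda M) (- t))) F"
    using J by eventually_elim (use D_lower J_neg l in \<open>blast intro: less_trans\<close>)
next
  fix u assume u: "- x_star M < u"
  then have "- u < x_star M" by (simp add: ereal_uminus_less_reorder)
  then obtain z where z: "- u < ereal z" "ereal z < x_star M" using ereal_dense2 by blast
  show "eventually (\<lambda>t. ereal (deriv (Lambda M) (- t)) < u) F"
    using big[OF z(2)] J
  proof eventually_elim
    case (elim t)
    then have "deriv (Lambda M) (- t) < - z" using D_odd by simp
    then have "ereal (deriv (Lambda M) (- t)) < - ereal z" by simp
    also have "\<dots> < u" using z(1) by (metis ereal_uminus_less_reorder)
    finally show ?case .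
  qed
qed

end


context mgf2 begin

lemma main:
  "J_set M = {t. - t_star M < ereal t \<and> ereal t < t_star M} \<and>
           strict_mono_on (J_set M) (deriv (Lambda M)) \<and>
           deriv (Lambda M) ` J_set M = {x. - x_star M < ereal x \<and> ereal x < x_star M} \<and>
           ((\<lambda>t. ereal (deriv (Lambda M) t)) \<longlongrightarrow> x_star M)
           (if t_star M = \<infinity> then at_top else at_left (real_of_ereal (t_star M))) \<and>
           ((\<lambda>t. ereal (deriv (Lambda M) t)) \<longlongrightarrow> - x_star M)
           (if t_star M = \<infinity> then at_bot else at_right (- real_of_ereal (t_star M)))"
proof -
  define F where "F = (if t_star M = \<infinity> then at_top else at_left (real_of_ereal (t_star M)))"
  have GF: "(if t_star M = \<infinity> then at_bot else at_right (- real_of_ereal (t_star M))) = filtermap uminus F"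
  proof (cases "t_star M = \<infinity>")
    case True
    then show ?thesis unfolding F_def using at_bot_mirror[where 'a=real] by simp
  next
    case False
    have "at_right (- real_of_ereal (t_star M)) = filtermap uminus (at_left (real_of_ereal (t_star M)))"
      using at_right_minus[of "- real_of_ereal (t_star M)"] by simp
    then show ?thesis unfolding F_def using False by simp
  qed
  have Fnb: "F \<noteq> bot" unfolding F_def by simp
  have eJ: "eventually (\<lambda>t. t \<in> J_set M) F" using ev_J unfolding F_def .
  have eB: "\<And>a. ereal a < x_star M \<Longrightarrow> eventually (\<lambda>t. a < deriv (Lambda M) t) F"
    using ev_big unfolding F_def .
  have lim1: "((\<lambda>t. ereal (deriv (Lambda M) t)) \<longlongrightarrow> x_star M) F"
    by (rule tend_pos[OF eJ eB])
  have lim2: "((\<lambda>t. ereal (deriv (Lambda M) t)) \<longlongrightarrow> - x_star M) (filtermap uminus F)"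
    by (rule tend_neg[OF eJ eB])
  have smono: "strict_mono_on (J_set M) (deriv (Lambda M))"
    by (intro strict_mono_onI D_smono)
  have img: "deriv (Lambda M) ` J_set M = {x. - x_star M < ereal x \<and> ereal x < x_star M}"
  proof (intro equalityI subsetI)
    fix y assume "y \<in> deriv (Lambda M) ` J_set M"
    then show "y \<in> {x. - x_star M < ereal x \<and> ereal x < x_star M}"
      using D_upper D_lower by auto
  next
    fix y assume "y \<in> {x. - x_star M < ereal x \<and> ereal x < x_star M}"
    then have y: "- x_star M < ereal y" "ereal y < x_star M" by auto
    have "eventually (\<lambda>t. t \<in> J_set M \<and> y < deriv (Lambda M) t) F"
      using eJ eB[OF y(2)] by eventually_elim simp
    then obtain t1 where t1: "t1 \<in> J_set M" "y < deriv (Lambda M) t1"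
      using eventually_happens'[OF Fnb] by blast
    have "ereal (- y) < x_star M" using y(1) by (metis ereal_uminus_less_reorder uminus_ereal.simps(1))
    have "eventually (\<lambda>t. t \<in> J_set M \<and> - y < deriv (Lambda M) t) F"
      using eJ eB[OF \<open>ereal (- y) < x_star M\<close>] by eventually_elim simp
    then obtain t2 where t2: "t2 \<in> J_set M" "- y < deriv (Lambda M) t2"
      using eventually_happens'[OF Fnb] by blast
    define t0 where "t0 = - t2"
    have t0: "t0 \<in> J_set M" "deriv (Lambda M) t0 < y"
      using t2 D_odd[OF t2(1)] J_neg[OF t2(1)] by (auto simp: t0_def)
    have lt: "t0 \<le> t1"
    proof (rule ccontr)
      assume "\<not> t0 \<le> t1"
      then have "deriv (Lambda M) t1 < deriv (Lambda M) t0" using D_smono t0 t1 by simp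
      then show False using t0 t1 by simp
    qed
    have sub: "{t0..t1} \<subseteq> J_set M" using t0 t1 by (auto intro: J_conv[OF t0(1) t1(1)])
    have "\<exists>x\<ge>t0. x \<le> t1 \<and> deriv (Lambda M) x = y"
      using t0 t1 lt by (intro IVT' continuous_on_subset[OF D_cont sub]) auto
    then obtain x where x: "t0 \<le> x" "x \<le> t1" "deriv (Lambda M) x = y" by blast
    have "x \<in> J_set M" using x sub by auto
    then show "y \<in> deriv (Lambda M) ` J_set M" using x by force
  qed
  have lim1': "((\<lambda>t. ereal (deriv (Lambda M) t)) \<longlongrightarrow> x_star M)
           (if t_star M = \<infinity> then at_top else at_left (real_of_ereal (t_star M)))"
    using lim1 unfolding F_def .
  have lim2': "((\<lambda>t. ereal (deriv (Lambda M) t)) \<longlongrightarrow> - x_star M)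
           (if t_star M = \<infinity> then at_bot else at_right (- real_of_ereal (t_star M)))"
    using lim2 unfolding GF .
  show ?thesis using J_char smono img lim1' lim2' by blast
qed

end

theorem lemma2p3:
  fixes M :: "real measure"
  assumes "prob_space M" and "sets M = sets borel"
    and "even_measure M" and "admissible M"
  shows "J_set M = {t. - t_star M < ereal t \<and> ereal t < t_star M} \<and>
           strict_mono_on (J_set M) (deriv (Lambda M)) \<and>
           deriv (Lambda M) ` J_set M = {x. - x_star M < ereal x \<and> ereal x < x_star M} \<and>
           ((\<lambda>t. ereal (deriv (Lambda M) t)) \<longlongrightarrow> x_star M)
           (if t_star M = \<infinity> then at_top else at_left (real_of_ereal (t_star M))) \<and>
           ((\<lambda>t. ereal (deriv (Lambda M) t)) \<longlongrightarrow> - x_star M)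
           (if t_star M = \<infinity> then at_bot else at_right (- real_of_ereal (t_star M)))"
proof -
  have adm: "(LINT x|M. (x - (LINT y|M. y))\<^sup>2) > 0"
     "(\<exists>r>0. \<forall>t. \<bar>t\<bar> < r \<longrightarrow> integrable M (\<lambda>x. exp (t * x)))"
     "(x_star M < \<infinity> \<longrightarrow> measure M {real_of_ereal (x_star M)} = 0)"
     "(x_star M < \<infinity> \<or>
      (x_star M = \<infinity> \<and> J_set M = UNIV) \<or>
      (x_star M = \<infinity> \<and> bounded (J_set M) \<and> log_concave_measure M))"
    using assms(4) unfolding admissible_def by auto
  have m: "mgf M"
    unfolding mgf_def mgf_axioms_def
    using assms(1,2,3) adm by (simp add: even_measure_def)
  interpret mgf M by (rule m)
  obtain r where r: "r > 0" "\<forall>t. \<bar>t\<bar> < r \<longrightarrow> integrable M (\<lambda>x. exp (t * x))" using adm(2) by blast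
  have rJ: "r / 2 \<in> J_set M" using r(2)[rule_format, of "r / 2"] r(1) by (simp add: J_iff)
  have up: "ereal s \<le> t_star M" if "s \<in> J_set M" for s
    unfolding t_star_def using that by (intro Sup_upper imageI)
  have opn: "\<forall>t\<in>J_set M. ereal t < t_star M"
  proof
    fix t assume t: "t \<in> J_set M"
    show "ereal t < t_star M"
    proof (cases "J_set M = UNIV")
      case True
      then have "ereal (t + 1) \<le> t_star M" using up by simp
      moreover have "ereal t < ereal (t + 1)" by simp
      ultimately show ?thesis by (rule order.strict_trans2[rotated])
    next
      case False
      then have xinf: "x_star M = \<infinity>" and lc: "log_concave_measure M"
        using adm(4) J_univ_fin by auto
      show ?thesis
      proof (cases "t > 0")
        case True
        then obtain u where "u > t" "u \<in> J_set M" using LC[OF xinf lc t] by blast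
        then have "ereal t < ereal u" "ereal u \<le> t_star M" using up by auto
        then show ?thesis by (rule order.strict_trans2)
      next
        case False
        then have "t < r / 2" using r by simp
        then have "ereal t < ereal (r / 2)" by simp
        then show ?thesis using up[OF rJ] by (rule order.strict_trans2)
      qed
    qed
  qed
  interpret mgf2 M by (unfold_locales) (rule opn)
  show ?thesis by (rule main)
qed


end
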